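(* Let $d\ge2$ and let $q^{\mathrm{pu}}$ be the $\varepsilon$-LDP $\texttt{PrivUnit}_2$ mechanism on $\mathbb{S}^{d-1}$ with parameters $p_0$ and $\gamma$ and estimator $\hat{\mathbf{x}}^{\mathrm{pu}}=\mathbf{z}/m_{\mathrm{pu}}$. Let $q^{\mathrm{mrc}}$ denote the MRC mechanism simulating $\texttt{PrivUnit}_2$ with $N$ candidates and estimator $\hat{\mathbf{x}}^{\mathrm{mrc}}=\mathbf{z}_K/m_{\mathrm{mrc}}$. Let $\lambda>0$. If \[ N\ge2e^{2\varepsilon}\Big(\frac{2(1+\lambda)}{\lambda(p_0-1/2)}\Big)^2\ln\Big(\frac{4(1+\lambda)}{\lambda(p_0-1/2)}\Big), \] then for every $\mathbf{x}\in\mathbb{S}^{d-1}$, with $E=\mathbb{E}_{q^{\mathrm{pu}}}[\|\hat{\mathbf{x}}^{\mathrm{pu}}-\mathbf{x}\|_2^2]$, \[ \mathbb{E}_{q^{\mathrm{mrc}}}\big[\|\hat{\mathbf{x}}^{\mathrm{mrc}}-\mathbf{x}\|_2^2\big]\le(1+\lambda)^2E+2(1+\lambda)(2+\lambda)\sqrt E+(2+\lambda)^2 . \]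
   Context: $\texttt{PrivUnit}_2$ with $\gamma\in[0,1]$, $p_0\ge1/2$ (chosen so that it is $\varepsilon$-LDP): on input $\mathbf{x}\in\mathbb{S}^{d-1}$ output $\mathbf{z}$ uniform on $\mathsf{Cap}_{\mathbf{x}}=\{\mathbf{z}\in\mathbb{S}^{d-1}:\langle\mathbf{z},\mathbf{x}\rangle\ge\gamma\}$ with probability $p_0$ and uniform on the complement otherwise; its density w.r.t. the uniform probability on the sphere is $q^{\mathrm{pu}}(\mathbf{z}\mid\mathbf{x})=p_0/\bar\theta$ on the cap and $(1-p_0)/(1-\bar\theta)$ off it, $\bar\theta$ being the uniform measure of the cap. For $p\in[0,1]$, $m(p)=\frac{(1-\gamma^2)^{\alpha}}{2^{d-2}(d-1)}\big[\frac{p}{B(\alpha,\alpha)-B(\tau;\alpha,\alpha)}-\frac{1-p}{B(\tau;\alpha,\alpha)}\big]$, $\alpha=\frac{d-1}2$, $\tau=\frac{1+\gamma}2$, $B(x;a,b)=\int_0^xt^{a-1}(1-t)^{b-1}dt$, $B(a,b)=B(1;a,b)$; $m_{\mathrm{pu}}=m(p_0)$. MRC: draw $\mathbf{z}_1,\dots,\mathbf{z}_N$ i.i.d. uniform on $\mathbb{S}^{d-1}$, $\pi^{\mathrm{mrc}}(k)=q^{\mathrm{pu}}(\mathbf{z}_k\mid\mathbf{x})/\sum_{k'}q^{\mathrm{pu}}(\mathbf{z}_{k'}\mid\mathbf{x})$, $K\sim\pi^{\mathrm{mrc}}$; $p_{\mathrm{mrc}}=\mathbb{P}(\mathbf{z}_K\in\mathsf{Cap}_{\mathbf{x}})$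 (over candidates and $K$) and $m_{\mathrm{mrc}}=m(p_{\mathrm{mrc}})$. Expectations under $q^{\mathrm{mrc}}$ are over the candidates and $K$. *)

theory Defs
  imports "HOL-Probability.Probability"
begin

text \<open>Uniform probability measure on the unit sphere of a Euclidean space,
  defined as the cone measure: push-forward of the normalised Lebesgue measure
  on the unit ball under the radial projection x / norm x.  (This coincides with
  the normalised surface measure.)\<close>
definition unif_sphere :: "'a::euclidean_space measure" where
  "unif_sphere = distr (uniform_measure lborel (ball 0 1)) borel (\<lambda>v. v /\<^sub>R norm v)"

definition cap :: "real \<Rightarrow> 'a::euclidean_space \<Rightarrow> 'a set" where
  "cap \<gamma> x = {z \<in> sphere 0 1. z \<bullet> x \<ge> \<gamma>}"

definition cap_measure :: "real \<Rightarrow> 'a::euclidean_space \<Rightarrow> real" where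
  "cap_measure \<gamma> x = measure unif_sphere (cap \<gamma> x)"

text \<open>Density of PrivUnit_2 w.r.t. the uniform probability on the sphere.\<close>
definition pu_density :: "real \<Rightarrow> real \<Rightarrow> 'a::euclidean_space \<Rightarrow> 'a \<Rightarrow> real" where
  "pu_density \<gamma> p0 x z =
     (if z \<in> cap \<gamma> x then p0 / cap_measure \<gamma> x
      else (1 - p0) / (1 - cap_measure \<gamma> x))"

definition inc_beta :: "real \<Rightarrow> real \<Rightarrow> real \<Rightarrow> real" where
  "inc_beta x a b = (LBINT t=0..x. t powr (a - 1) * (1 - t) powr (b - 1))"

definition m_fun :: "nat \<Rightarrow> real \<Rightarrow> real \<Rightarrow> real" where
  "m_fun d \<gamma> p =
     (let \<alpha> = (real d - 1) / 2; \<tau> = (1 + \<gamma>) / 2 in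
       (1 - \<gamma>\<^sup>2) powr \<alpha> / (2 ^ (d - 2) * (real d - 1)) *
       (p / (inc_beta 1 \<alpha> \<alpha> - inc_beta \<tau> \<alpha> \<alpha>) - (1 - p) / inc_beta \<tau> \<alpha> \<alpha>))"

definition m_pu :: "'a::euclidean_space itself \<Rightarrow> real \<Rightarrow> real \<Rightarrow> real" where
  "m_pu _ \<gamma> p0 = m_fun DIM('a) \<gamma> p0"

definition pu_mse :: "real \<Rightarrow> real \<Rightarrow> 'a::euclidean_space \<Rightarrow> real" where
  "pu_mse \<gamma> p0 x =
     (\<integral>z. (norm ((1 / m_pu TYPE('a) \<gamma> p0) *\<^sub>R z - x))\<^sup>2 * pu_density \<gamma> p0 x z \<partial>unif_sphere)"

definition candidates :: "nat \<Rightarrow> (nat \<Rightarrow> 'a::euclidean_space) measure" where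
  "candidates N = PiM {..<N} (\<lambda>_. unif_sphere)"

definition mrc_pi :: "real \<Rightarrow> real \<Rightarrow> nat \<Rightarrow> 'a::euclidean_space \<Rightarrow> (nat \<Rightarrow> 'a) \<Rightarrow> nat \<Rightarrow> real" where
  "mrc_pi \<gamma> p0 N x zs k =
     pu_density \<gamma> p0 x (zs k) / (\<Sum>k'<N. pu_density \<gamma> p0 x (zs k'))"

text \<open>p_mrc = P(z_K in Cap_x), over candidates and K.\<close>
definition p_mrc :: "real \<Rightarrow> real \<Rightarrow> nat \<Rightarrow> 'a::euclidean_space \<Rightarrow> real" where
  "p_mrc \<gamma> p0 N x =
     (\<integral>zs. (\<Sum>k<N. mrc_pi \<gamma> p0 N x zs k * indicator (cap \<gamma> x) (zs k)) \<partial>candidates N)"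

definition m_mrc :: "real \<Rightarrow> real \<Rightarrow> nat \<Rightarrow> 'a::euclidean_space \<Rightarrow> real" where
  "m_mrc \<gamma> p0 N x = m_fun DIM('a) \<gamma> (p_mrc \<gamma> p0 N x)"

definition mrc_mse :: "real \<Rightarrow> real \<Rightarrow> nat \<Rightarrow> 'a::euclidean_space \<Rightarrow> real" where
  "mrc_mse \<gamma> p0 N x =
     (\<integral>zs. (\<Sum>k<N. mrc_pi \<gamma> p0 N x zs k *
              (norm ((1 / m_mrc \<gamma> p0 N x) *\<^sub>R zs k - x))\<^sup>2) \<partial>candidates N)"

definition pu_ldp :: "'a::euclidean_space itself \<Rightarrow> real \<Rightarrow> real \<Rightarrow> real \<Rightarrow> bool" where
  "pu_ldp _ \<epsilon> \<gamma> p0 \<longleftrightarrow>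
     (\<forall>x\<in>sphere (0::'a) 1. \<forall>x'\<in>sphere (0::'a) 1. \<forall>z\<in>sphere (0::'a) 1.
        pu_density \<gamma> p0 x z \<le> exp \<epsilon> * pu_density \<gamma> p0 x' z)"

end

theory Submission
  imports Defs
begin


lemma nrm_meas[measurable]: "(\<lambda>v::'a::euclidean_space. v /\<^sub>R norm v) \<in> borel_measurable borel"
  by measurable

lemma ball_pos: "0 < emeasure lborel (ball (0::'a::euclidean_space) 1)"
proof -
  have "0 < measure lborel (ball (0::'a) 1)" using content_ball_gt_0_iff[of "0::'a" 1] by simp
  then show ?thesis
    using emeasure_eq_ennreal_measure[of lborel "ball (0::'a) 1"] emeasure_lborel_ball_finite[of "0::'a" 1]
    by (simp add: less_top)
qed

lemma ps_U: "prob_space (uniform_measure lborel (ball (0::'a::euclidean_space) 1))"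
  using ball_pos[where 'a='a] emeasure_lborel_ball_finite[of "0::'a" 1]
  by (intro prob_space_uniform_measure) auto

lemma ps_unif: "prob_space (unif_sphere :: 'a::euclidean_space measure)"
  unfolding unif_sphere_def
  by (intro prob_space.prob_space_distr ps_U) simp

lemma space_unif[simp]: "space unif_sphere = UNIV"
  by (simp add: unif_sphere_def)

lemma sets_unif[simp]: "sets unif_sphere = sets borel"
  by (simp add: unif_sphere_def)

lemma AE_unif_norm: "AE z in (unif_sphere::'a::euclidean_space measure). norm z = 1"
proof -
  have "AE v in uniform_measure lborel (ball (0::'a) 1). v \<noteq> 0"
  proof (rule AE_uniform_measureI)
    show "ball (0::'a) 1 \<in> sets lborel" by simp
    have z: "{0::'a} \<in> null_sets lborel" by (rule finite_imp_null_set_lborel) simp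
    show "AE x in lborel. x \<in> ball 0 1 \<longrightarrow> x \<noteq> (0::'a)"
      by (rule AE_mp[OF AE_not_in[OF z]]) auto
  qed
  then have "AE v in uniform_measure lborel (ball (0::'a) 1). norm (v /\<^sub>R norm v) = 1"
    by eventually_elim simp
  then show ?thesis unfolding unif_sphere_def
    by (subst AE_distr_iff) auto
qed

lemma meas_unif:
  assumes S: "S \<in> sets borel"
  shows "measure (unif_sphere::'a::euclidean_space measure) S =
    measure lborel ((\<lambda>v. v /\<^sub>R norm v) -` S \<inter> ball (0::'a) 1) / measure lborel (ball (0::'a) 1)"
proof -
  have m: "(\<lambda>v::'a. v /\<^sub>R norm v) \<in> measurable (uniform_measure lborel (ball 0 1)) borel"
    by simp
  have pre: "(\<lambda>v::'a. v /\<^sub>R norm v) -` S \<in> sets lborel"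
    using measurable_sets[OF nrm_meas S] by simp
  have "measure (unif_sphere::'a measure) S = measure (uniform_measure lborel (ball (0::'a) 1)) ((\<lambda>v. v /\<^sub>R norm v) -` S)"
    unfolding unif_sphere_def by (subst measure_distr[OF m S]) simp
  also have "\<dots> = measure lborel (ball 0 1 \<inter> (\<lambda>v. v /\<^sub>R norm v) -` S) / measure lborel (ball (0::'a) 1)"
    using ball_pos[where 'a='a] emeasure_lborel_ball_finite[of "0::'a" 1] pre
    by (subst measure_uniform_measure) auto
  finally show ?thesis by (simp add: Int_commute)
qed

lemma ball_meas_pos: "0 < measure lborel (ball (0::'a::euclidean_space) 1)"
  using content_ball_gt_0_iff[of "0::'a" 1] by simp

lemma unif_pos:
  assumes S: "S \<in> sets borel" and Op: "open Op" "Op \<noteq> {}" "Op \<subseteq> ball 0 1"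
    and sub: "\<And>v. v \<in> Op \<Longrightarrow> v /\<^sub>R norm v \<in> S"
  shows "0 < measure (unif_sphere::'a::euclidean_space measure) S"
proof -
  obtain c where c: "c \<in> Op" using Op by auto
  obtain e where e: "e > 0" "ball c e \<subseteq> Op" using Op(1) c open_contains_ball by blast
  have pre: "(\<lambda>v::'a. v /\<^sub>R norm v) -` S \<inter> ball 0 1 \<in> sets lborel"
    using measurable_sets[OF nrm_meas S] by simp
  have "ball c e \<subseteq> (\<lambda>v::'a. v /\<^sub>R norm v) -` S \<inter> ball 0 1" using e Op sub by auto
  then have "measure lborel (ball c e) \<le> measure lborel ((\<lambda>v::'a. v /\<^sub>R norm v) -` S \<inter> ball 0 1)"
    using pre le_less_trans[OF emeasure_mono[of "(\<lambda>v::'a. v /\<^sub>R norm v) -` S \<inter> ball 0 1" "ball 0 1" lborel] emeasure_lborel_ball_finite[of 0 1]]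
    by (intro measure_mono_fmeasurable) (auto simp: fmeasurable_def)
  moreover have "0 < measure lborel (ball c e)" using content_ball_gt_0_iff[of c e] e by simp
  ultimately have "0 < measure lborel ((\<lambda>v::'a. v /\<^sub>R norm v) -` S \<inter> ball 0 1)" by linarith
  then show ?thesis using ball_meas_pos[where 'a='a] unfolding meas_unif[OF S] by (rule divide_pos_pos)
qed

lemma cap_sets[measurable]: "cap \<gamma> x \<in> sets borel"
proof -
  have e: "cap \<gamma> x = sphere 0 1 \<inter> {z. \<gamma> \<le> z \<bullet> x}" by (auto simp: cap_def)
  have "closed {z. \<gamma> \<le> z \<bullet> x}"
    by (intro closed_Collect_le continuous_intros)
  then have "closed (cap \<gamma> x)" unfolding e by (intro closed_Int closed_sphere)
  then show ?thesis by simp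
qed


lemma theta_pos:
  fixes x :: "'a::euclidean_space"
  assumes x: "norm x = 1" and g: "\<gamma> < 1"
  shows "0 < cap_measure \<gamma> x"
  unfolding cap_measure_def
proof (rule unif_pos[where Op="{v. \<gamma> * norm v < v \<bullet> x} \<inter> ball 0 1"])
  show "open ({v. \<gamma> * norm v < v \<bullet> x} \<inter> ball 0 1)"
    by (intro open_Int open_ball open_Collect_less continuous_intros)
  have "x /\<^sub>R 2 \<in> {v. \<gamma> * norm v < v \<bullet> x} \<inter> ball 0 1"
    using x g by (auto simp: inner_commute[of x] dot_square_norm)
  then show "{v. \<gamma> * norm v < v \<bullet> x} \<inter> ball 0 1 \<noteq> {}" by blast
  fix v assume v: "v \<in> {v. \<gamma> * norm v < v \<bullet> x} \<inter> ball 0 1"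
  then have "v \<noteq> 0" by auto
  then have "norm v > 0" by simp
  with v have "\<gamma> \<le> (v \<bullet> x) / norm v" by (auto simp: field_simps)
  with \<open>v \<noteq> 0\<close> show "v /\<^sub>R norm v \<in> cap \<gamma> x"
    by (auto simp: cap_def divide_inverse mult.commute)
qed auto


lemma theta_lt1:
  fixes x :: "'a::euclidean_space"
  assumes x: "norm x = 1" and g: "0 \<le> \<gamma>"
  shows "cap_measure \<gamma> x < 1"
proof -
  interpret prob_space "unif_sphere :: 'a measure" by (rule ps_unif)
  have "0 < measure unif_sphere (UNIV - cap \<gamma> x)"
  proof (rule unif_pos[where Op="{v. v \<bullet> x < 0} \<inter> ball 0 1"])
    show "open ({v. v \<bullet> x < 0} \<inter> ball 0 1)"
      by (intro open_Int open_ball open_Collect_less continuous_intros)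
    have "- x /\<^sub>R 2 \<in> {v. v \<bullet> x < 0} \<inter> ball 0 1"
      using x by (auto simp: dot_square_norm)
    then show "{v. v \<bullet> x < 0} \<inter> ball 0 1 \<noteq> {}" by blast
    fix v assume v: "v \<in> {v. v \<bullet> x < 0} \<inter> ball 0 1"
    then have "v \<noteq> 0" by auto
    then have "norm v > 0" by simp
    with v have "(v \<bullet> x) / norm v < 0" by (auto simp: divide_neg_pos)
    with g show "v /\<^sub>R norm v \<in> UNIV - cap \<gamma> x"
      by (auto simp: cap_def divide_inverse mult.commute)
  qed auto
  moreover have "measure unif_sphere (UNIV - cap \<gamma> x) = 1 - measure unif_sphere (cap \<gamma> x)"
    using prob_compl[of "cap \<gamma> x"] by simp
  ultimately show ?thesis unfolding cap_measure_def by simp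
qed


lemma null_lborel_of_lebesgue:
  fixes P :: "'a::euclidean_space set"
  assumes n: "P \<in> null_sets lebesgue" and l: "P \<in> sets lborel"
  shows "measure lborel P = 0"
proof -
  have "measure lebesgue P = 0" unfolding measure_def using null_setsD1[OF n] by simp
  then show "measure lborel P = 0" using measure_completion[OF l] by simp
qed

lemma equator_null:
  fixes y :: "'a::euclidean_space"
  assumes y: "norm y = 1"
  shows "measure (unif_sphere::'a measure) {z. z \<bullet> y = 0} = 0"
proof -
  define P where "P = (\<lambda>v::'a. v /\<^sub>R norm v) -` {z. z \<bullet> y = 0} \<inter> ball 0 1"
  have S: "{z::'a. z \<bullet> y = 0} \<in> sets borel"
    by (intro borel_closed closed_Collect_eq continuous_intros)
  have sub: "P \<subseteq> {v. y \<bullet> v = 0}"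
  proof
    fix v :: 'a assume "v \<in> P"
    then have "v = 0 \<or> v \<bullet> y = 0" by (simp add: P_def)
    then have "v \<bullet> y = 0" by auto
    then show "v \<in> {v. y \<bullet> v = 0}" by (simp add: inner_commute)
  qed
  have Pl: "P \<in> sets lborel"
    using measurable_sets[OF nrm_meas S] unfolding P_def by simp
  have "negligible {v::'a. y \<bullet> v = 0}" using y by (intro negligible_hyperplane) auto
  then have N: "{v::'a. y \<bullet> v = 0} \<in> null_sets lebesgue" by (simp add: negligible_iff_null_sets)
  have "P \<in> sets lebesgue" using Pl by (rule sets_completionI_sets)
  then have "P \<in> null_sets lebesgue" by (rule null_sets_subset[OF N _ sub])
  then have "measure lborel P = 0" using Pl by (rule null_lborel_of_lebesgue)
  then show ?thesis by (simp add: meas_unif[OF S] P_def)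
qed

lemma theta_sum:
  fixes y :: "'a::euclidean_space"
  assumes y: "norm y = 1" and g: "0 \<le> \<gamma>"
  shows "cap_measure \<gamma> y + cap_measure \<gamma> (-y) \<le> 1"
proof -
  interpret prob_space "unif_sphere :: 'a measure" by (rule ps_unif)
  have S: "{z::'a. z \<bullet> y = 0} \<in> sets borel"
    by (intro borel_closed closed_Collect_eq continuous_intros)
  have "cap \<gamma> y \<inter> cap \<gamma> (-y) \<subseteq> {z. z \<bullet> y = 0}" using g by (auto simp: cap_def)
  then have "measure unif_sphere (cap \<gamma> y \<inter> cap \<gamma> (-y)) \<le> 0"
    using equator_null[OF y] S finite_measure_mono[of "cap \<gamma> y \<inter> cap \<gamma> (-y)" "{z. z \<bullet> y = 0}"] by simp
  moreover have "measure unif_sphere (cap \<gamma> y \<union> cap \<gamma> (-y)) = cap_measure \<gamma> y + cap_measure \<gamma> (-y) - measure unif_sphere (cap \<gamma> y \<inter> cap \<gamma> (-y))"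
    unfolding cap_measure_def by (rule measure_Un3) (auto simp: fmeasurable_eq_sets)
  moreover have "measure unif_sphere (cap \<gamma> y \<union> cap \<gamma> (-y)) \<le> 1" by (rule prob_le_1)
  ultimately show ?thesis by linarith
qed



definition gb :: "real \<Rightarrow> real \<Rightarrow> real" where
  "gb a t = t powr (a - 1) * (1 - t) powr (a - 1)"

lemma gb_nonneg: "0 \<le> gb a t" by (simp add: gb_def)

lemma gb_int01: "a > 0 \<Longrightarrow> gb a integrable_on {0..1}"
  using has_integral_Beta_real[of a a] unfolding gb_def by blast

lemma gb_int: "a > 0 \<Longrightarrow> 0 \<le> u \<Longrightarrow> v \<le> 1 \<Longrightarrow> gb a integrable_on {u..v}"
  by (rule integrable_on_subinterval[OF gb_int01]) auto

lemma gb_meas[measurable]: "gb a \<in> borel_measurable borel"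
  unfolding gb_def by measurable

lemma inc_beta_eq:
  assumes a: "a > 0" and u: "0 \<le> u" "u \<le> 1"
  shows "inc_beta u a a = integral {0..u} (gb a)"
proof -
  have "gb a absolutely_integrable_on {0..u}"
    using gb_int[OF a order_refl u(2)] by (intro nonnegative_absolutely_integrable) (auto simp: gb_nonneg)
  then have "set_integrable lebesgue {0..u} (gb a)" by (simp add: absolutely_integrable_on_def)
  then have "set_integrable lborel {0..u} (gb a)"
    unfolding set_integrable_def by (subst (asm) integrable_completion) auto
  then have "(LBINT t=0..u. gb a t) = integral {0..u} (gb a)"
    using interval_integral_eq_integral[of 0 u "gb a"] u by (simp add: zero_ereal_def)
  then show ?thesis by (simp add: inc_beta_def gb_def)
qed

lemma gb_sym: "gb a (1 - t) = gb a t"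
  by (simp add: gb_def)

lemma gb_reflect:
  assumes a: "a > 0" and t: "0 \<le> t" "t \<le> 1"
  shows "integral {t..1} (gb a) = integral {0..1-t} (gb a)"
proof -
  have h: "(gb a has_integral integral {t..1} (gb a)) (cbox t 1)"
    using integrable_integral[OF gb_int[OF a t(1) order_refl]] by (simp add: cbox_interval)
  have "((\<lambda>x. gb a ((-1) *\<^sub>R x + 1)) has_integral (1 / (\<bar>-1\<bar> ^ DIM(real))) *\<^sub>R integral {t..1} (gb a))
      ((\<lambda>x. (1 / (-1)) *\<^sub>R x + -((1 / (-1)) *\<^sub>R 1)) ` cbox t 1)"
    by (rule has_integral_affinity[OF h]) simp
  moreover have "(\<lambda>x::real. (1 / (-1)) *\<^sub>R x + -((1 / (-1)) *\<^sub>R 1)) ` cbox t 1 = {0..1-t}"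
  proof -
    have "(\<lambda>x::real. (1 / (-1)) *\<^sub>R x + -((1 / (-1)) *\<^sub>R 1)) = (\<lambda>x. 1 - x)" by auto
    moreover have "(\<lambda>x::real. 1 - x) ` {t..1} = {0..1-t}"
    proof
      show "(\<lambda>x::real. 1 - x) ` {t..1} \<subseteq> {0..1-t}" by auto
      show "{0..1-t} \<subseteq> (\<lambda>x::real. 1 - x) ` {t..1}"
      proof
        fix y assume "y \<in> {0..1-t}"
        then have "1 - y \<in> {t..1}" "y = 1 - (1 - y)" by auto
        then show "y \<in> (\<lambda>x::real. 1 - x) ` {t..1}" by blast
      qed
    qed
    ultimately show ?thesis by (simp add: cbox_interval)
  qed
  moreover have "(\<lambda>x. gb a ((-1) *\<^sub>R x + 1)) = gb a"
    using gb_sym[of a] by (auto simp: fun_eq_iff)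
  ultimately have "(gb a has_integral integral {t..1} (gb a)) {0..1-t}" by simp
  then show ?thesis by (rule integral_unique[symmetric])
qed

lemma gb_pos_int:
  assumes a: "a > 0" and ab: "0 \<le> u" "u < v" "v \<le> 1"
  shows "0 < integral {u..v} (gb a)"
proof -
  define c where "c = (3 * u + v) / 4"
  define w where "w = (u + 3 * v) / 4"
  have ce: "0 < c" "c < w" "w < 1" "u \<le> c" "w \<le> v" using ab by (auto simp: c_def w_def)
  have cont: "continuous_on (cbox c w) (gb a)"
    unfolding gb_def using ce by (auto intro!: continuous_intros simp: cbox_interval)
  have nn: "integral {c..w} (gb a) \<le> integral {u..v} (gb a)"
    using ce gb_int[OF a] ab by (intro integral_subset_le) (auto simp: gb_nonneg)
  have "integral {c..w} (gb a) \<noteq> 0"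
  proof
    assume z: "integral {c..w} (gb a) = 0"
    have "(gb a has_integral 0) (cbox c w)"
      using gb_int[OF a, of c w] ce z by (metis cbox_interval has_integral_integral less_eq_real_def)
    then have "gb a ((c+w)/2) = 0"
      using ce by (intro has_integral_0_cbox_imp_0[OF cont _ _ _]) (auto simp: gb_nonneg box_ne_empty cbox_interval)
    moreover have "0 < gb a ((c+w)/2)" using ce by (auto simp: gb_def)
    ultimately show False by simp
  qed
  moreover have "0 \<le> integral {c..w} (gb a)"
    using gb_int[OF a, of c w] ce by (intro integral_nonneg) (auto simp: gb_nonneg)
  ultimately show ?thesis using nn by linarith
qed

lemma m_fun_form:
  assumes d: "d \<ge> 2" and g: "0 \<le> \<gamma>" "\<gamma> < 1"
  obtains K B1 B2 where "K > 0" "0 < B1" "B1 \<le> B2"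
    "\<And>p. m_fun d \<gamma> p = K * (p / B1 - (1 - p) / B2)"
proof -
  define a where "a = (real d - 1) / 2"
  define t where "t = (1 + \<gamma>) / 2"
  have a: "a > 0" using d by (simp add: a_def)
  have t: "1/2 \<le> t" "t < 1" using g by (auto simp: t_def)
  define K where "K = (1 - \<gamma>\<^sup>2) powr a / (2 ^ (d - 2) * (real d - 1))"
  define B1 where "B1 = inc_beta 1 a a - inc_beta t a a"
  define B2 where "B2 = inc_beta t a a"
  have "\<gamma>\<^sup>2 < 1" using g by (simp add: abs_square_less_1)
  then have K: "K > 0" using d by (simp add: K_def)
  have B2: "B2 = integral {0..t} (gb a)" using inc_beta_eq[OF a] t by (simp add: B2_def)
  have "integral {0..t} (gb a) + integral {t..1} (gb a) = integral {0..1} (gb a)"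
    using t gb_int01[OF a] by (intro Henstock_Kurzweil_Integration.integral_combine[of 0 t 1]) auto
  then have B1: "B1 = integral {t..1} (gb a)"
    using inc_beta_eq[OF a, of 1] inc_beta_eq[OF a, of t] t by (simp add: B1_def)
  have B1p: "0 < B1" unfolding B1 using t by (intro gb_pos_int[OF a]) auto
  have "integral {0..1-t} (gb a) \<le> integral {0..t} (gb a)"
    using t gb_int[OF a] by (intro integral_subset_le) (auto simp: gb_nonneg)
  then have B12: "B1 \<le> B2" unfolding B1 B2 using gb_reflect[OF a, of t] t by simp
  have "\<And>p. m_fun d \<gamma> p = K * (p / B1 - (1 - p) / B2)"
    by (simp add: m_fun_def Let_def K_def B1_def B2_def a_def t_def)
  then show ?thesis using that K B1p B12 by blast
qed

lemma m_key:
  fixes K B1 B2 lam p0 q :: real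
  assumes "K > 0" "0 < B1" "B1 \<le> B2" "lam > 0" "1/2 < p0"
    and q: "q \<ge> p0 - lam * (p0 - 1/2) / (1 + lam)"
  shows "K * (p0 / B1 - (1 - p0) / B2) > 0"
    "K * (q / B1 - (1 - q) / B2) \<ge> K * (p0 / B1 - (1 - p0) / B2) / (1 + lam)"
proof -
  define u where "u = 1 / B1"
  define v where "v = 1 / B2"
  have uv: "0 < v" "v \<le> u" using assms by (auto simp: u_def v_def frac_le)
  have e: "\<And>p. p / B1 - (1 - p) / B2 = p * (u + v) - v"
    using assms(2,3) by (simp add: u_def v_def diff_divide_distrib add_divide_distrib algebra_simps)
  have "p0 * (u + v) - v > 0"
  proof -
    have "p0 * (u + v) - v \<ge> (p0 - 1/2) * (u + v)" using uv by (simp add: algebra_simps)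
    moreover have "(p0 - 1/2) * (u + v) > 0" using uv assms by simp
    ultimately show ?thesis by linarith
  qed
  then show "K * (p0 / B1 - (1 - p0) / B2) > 0" using assms by (simp add: e)
  have q2: "q - p0 / (1 + lam) \<ge> lam / (2 * (1 + lam))"
  proof -
    have l: "1 + lam \<noteq> 0" using assms by simp
    have "p0 - lam * (p0 - 1/2) / (1 + lam) - p0 / (1 + lam) = (p0 * (1 + lam) - lam * (p0 - 1/2) - p0) / (1 + lam)"
      using l by (simp add: diff_divide_distrib)
    also have "p0 * (1 + lam) - lam * (p0 - 1/2) - p0 = lam / 2" by (simp add: algebra_simps)
    finally have "p0 - lam * (p0 - 1/2) / (1 + lam) - p0 / (1 + lam) = lam / (2 * (1 + lam))" by simp
    then show ?thesis using q by linarith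
  qed
  have l: "1 + lam \<noteq> 0" using assms by simp
  have "(q * (u + v) - v) - (p0 * (u + v) - v) / (1 + lam) = (q - p0 / (1 + lam)) * (u + v) - v * lam / (1 + lam)"
    using l by (simp add: divide_simps) (simp add: algebra_simps)
  also have "\<dots> \<ge> lam / (2 * (1 + lam)) * (u + v) - v * lam / (1 + lam)"
    using q2 uv by (intro diff_right_mono mult_right_mono) auto
  also have "lam / (2 * (1 + lam)) * (u + v) - v * lam / (1 + lam) = lam / (2 * (1 + lam)) * (u - v)"
    using l by (simp add: divide_simps) (simp add: algebra_simps)
  also have "\<dots> \<ge> 0" using uv assms by simp
  finally have "(q * (u + v) - v) \<ge> (p0 * (u + v) - v) / (1 + lam)" by simp
  then have "K * (q * (u + v) - v) \<ge> K * ((p0 * (u + v) - v) / (1 + lam))"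
    using assms by (intro mult_left_mono) auto
  then show "K * (q / B1 - (1 - q) / B2) \<ge> K * (p0 / B1 - (1 - p0) / B2) / (1 + lam)"
    by (simp add: e)
qed



lemma pu_density_meas[measurable]: "pu_density \<gamma> p0 x \<in> borel_measurable borel"
  unfolding pu_density_def by measurable

lemma meas_unif_iff: "f \<in> borel_measurable (unif_sphere::'a::euclidean_space measure) \<longleftrightarrow> f \<in> borel_measurable (borel::'a measure)"
  by (simp add: measurable_cong_sets[OF sets_unif refl])

lemma pu_density_meas2[measurable]: "pu_density \<gamma> p0 x \<in> borel_measurable unif_sphere"
  using pu_density_meas meas_unif_iff by blast

lemma pu_density_nonneg:
  assumes "norm x = 1" "0 \<le> \<gamma>" "\<gamma> < 1" "p0 \<le> 1" "0 \<le> p0"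
  shows "0 \<le> pu_density \<gamma> p0 x z"
  using theta_pos[of x \<gamma>] theta_lt1[of x \<gamma>] assms by (simp add: pu_density_def)

lemma pu_density_le:
  assumes "p0 / cap_measure \<gamma> x \<le> M" "(1 - p0) / (1 - cap_measure \<gamma> x) \<le> M"
  shows "pu_density \<gamma> p0 x z \<le> M"
  using assms by (simp add: pu_density_def)

lemma pu_density_int:
  fixes x :: "'a::euclidean_space"
  assumes x: "norm x = 1" and g: "0 \<le> \<gamma>" "\<gamma> < 1"
  shows "integrable unif_sphere (pu_density \<gamma> p0 x)"
    "(\<integral>z. pu_density \<gamma> p0 x z \<partial>unif_sphere) = 1"
proof -
  interpret prob_space "unif_sphere :: 'a measure" by (rule ps_unif)
  define th where "th = cap_measure \<gamma> x"
  have th: "0 < th" "th < 1" using theta_pos[OF x g(2)] theta_lt1[OF x g(1)] by (auto simp: th_def)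
  have e: "pu_density \<gamma> p0 x = (\<lambda>z. (p0 / th) * indicator (cap \<gamma> x) z + ((1 - p0) / (1 - th)) * indicator (UNIV - cap \<gamma> x) z)"
    by (auto simp: fun_eq_iff pu_density_def th_def split: split_indicator)
  have i1: "integrable unif_sphere (indicator (cap \<gamma> x) :: 'a \<Rightarrow> real)"
    by (intro integrable_indicator_iff[THEN iffD2]) (auto simp: less_top[symmetric])
  have i2: "integrable unif_sphere (indicator (UNIV - cap \<gamma> x) :: 'a \<Rightarrow> real)"
    by (intro integrable_indicator_iff[THEN iffD2]) (auto simp: less_top[symmetric])
  show "integrable unif_sphere (pu_density \<gamma> p0 x)"
    by (rule integrable_const_bound[where B="\<bar>p0 / th\<bar> + \<bar>(1 - p0) / (1 - th)\<bar>"])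
       (auto simp: pu_density_def th_def)
  have "measure unif_sphere (UNIV - cap \<gamma> x) = 1 - th"
    using prob_compl[of "cap \<gamma> x"] by (simp add: th_def cap_measure_def)
  then have "(\<integral>z. pu_density \<gamma> p0 x z \<partial>unif_sphere) = (p0 / th) * th + ((1 - p0) / (1 - th)) * (1 - th)"
    unfolding e using i1 i2 by (simp add: th_def cap_measure_def)
  also have "\<dots> = 1" using th by simp
  finally show "(\<integral>z. pu_density \<gamma> p0 x z \<partial>unif_sphere) = 1" .
qed

lemma ldp_cons:
  fixes x :: "'a::euclidean_space"
  assumes x: "norm x = 1" and d2: "DIM('a) \<ge> 2" and g: "0 \<le> \<gamma>" "\<gamma> < 1"
    and p0: "1/2 < p0" "p0 \<le> 1" and ldp: "pu_ldp TYPE('a) \<epsilon> \<gamma> p0"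
  shows "p0 < 1" "p0 / cap_measure \<gamma> x \<le> exp \<epsilon>" "(1 - p0) / (1 - cap_measure \<gamma> x) \<le> exp \<epsilon>"
proof -
  obtain y0 where y0: "y0 \<noteq> 0" "orthogonal x y0" using orthogonal_to_vector_exists[OF d2] by blast
  define y where "y = y0 /\<^sub>R norm y0"
  have y: "norm y = 1" "x \<bullet> y = 0" using y0 by (auto simp: y_def orthogonal_def)
  have "cap_measure \<gamma> y + cap_measure \<gamma> (-y) \<le> 1" by (rule theta_sum[OF y(1) g(1)])
  then obtain x' where x': "norm x' = 1" "x \<bullet> x' = 0" "cap_measure \<gamma> x' \<le> 1/2"
  proof (cases "cap_measure \<gamma> y \<le> 1/2")
    case True then show ?thesis using that[of y] y by auto
  next
    case False
    then have "cap_measure \<gamma> (-y) \<le> 1/2" using \<open>cap_measure \<gamma> y + cap_measure \<gamma> (-y) \<le> 1\<close> by simp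
    then show ?thesis using that[of "-y"] y by auto
  qed
  define th where "th = cap_measure \<gamma> x"
  define th' where "th' = cap_measure \<gamma> x'"
  have th: "0 < th" "th < 1" using theta_pos[OF x g(2)] theta_lt1[OF x g(1)] by (auto simp: th_def)
  have th': "0 < th'" "th' \<le> 1/2" using theta_pos[OF x'(1) g(2)] x' by (auto simp: th'_def)
  have pp: "0 \<le> (1 - p0) * (1 - 2 * th')" using th' p0 by (intro mult_nonneg_nonneg) auto
  have b': "(1 - p0) / (1 - th') \<le> 2 * (1 - p0)"
    using th' p0 pp by (simp add: divide_simps algebra_simps)
  have xs: "x \<in> sphere 0 1" "x' \<in> sphere 0 1" using x x'(1) by auto
  define s where "s = sqrt (1 - \<gamma>\<^sup>2)"
  have "\<gamma>\<^sup>2 < 1" using g by (simp add: abs_square_less_1)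
  then have s: "0 < s" "s\<^sup>2 = 1 - \<gamma>\<^sup>2" by (auto simp: s_def)
  define z1 where "z1 = \<gamma> *\<^sub>R x - s *\<^sub>R x'"
  have xx: "x \<bullet> x = 1" "x' \<bullet> x' = 1" "x' \<bullet> x = 0" "x \<bullet> x' = 0" using x x'
    by (auto simp: dot_square_norm inner_commute)
  have "z1 \<bullet> z1 = \<gamma>\<^sup>2 + s\<^sup>2"
    unfolding z1_def by (simp add: inner_diff_left inner_diff_right xx power2_eq_square)
  then have "norm z1 = 1" using s by (simp add: norm_eq_1)
  moreover have "z1 \<bullet> x = \<gamma>" "z1 \<bullet> x' = - s"
    unfolding z1_def by (simp_all add: inner_diff_left xx)
  ultimately have z1: "z1 \<in> cap \<gamma> x" "z1 \<notin> cap \<gamma> x'" "z1 \<in> sphere 0 1"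
    using s g by (auto simp: cap_def)
  have "pu_density \<gamma> p0 x z1 \<le> exp \<epsilon> * pu_density \<gamma> p0 x' z1"
    using ldp xs z1 unfolding pu_ldp_def by blast
  then have A: "p0 / th \<le> exp \<epsilon> * ((1 - p0) / (1 - th'))"
    using z1 by (simp add: pu_density_def th_def th'_def)
  show "p0 < 1"
  proof (rule ccontr)
    assume "\<not> p0 < 1"
    then have "p0 = 1" using p0 by simp
    then show False using A th by simp
  qed
  have "p0 / th \<le> exp \<epsilon> * (2 * (1 - p0))"
    using A b' by (meson exp_gt_zero less_imp_le mult_left_mono order_trans)
  also have "\<dots> \<le> exp \<epsilon>" using p0 by simp
  finally show "p0 / cap_measure \<gamma> x \<le> exp \<epsilon>" by (simp add: th_def)
  define z2 where "z2 = - ((x + x') /\<^sub>R sqrt 2)"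
  have "(x + x') \<bullet> (x + x') = 2"
    by (simp add: inner_add_left inner_add_right xx inner_commute[of x x'])
  then have "norm (x + x') = sqrt 2" by (simp add: norm_eq_sqrt_inner)
  then have "norm z2 = 1" by (simp add: z2_def)
  moreover have e2: "z2 \<bullet> x = - (1 / sqrt 2)" "z2 \<bullet> x' = - (1 / sqrt 2)"
    unfolding z2_def by (simp_all add: inner_add_left xx inner_commute[of x x'] inverse_eq_divide)
  moreover have "0 < 1 / sqrt (2::real)" by simp
  ultimately have "z2 \<bullet> x < \<gamma>" "z2 \<bullet> x' < \<gamma>" "norm z2 = 1" using g by linarith+
  then have z2: "z2 \<notin> cap \<gamma> x" "z2 \<notin> cap \<gamma> x'" "z2 \<in> sphere 0 1"
    by (auto simp: cap_def)
  have "pu_density \<gamma> p0 x z2 \<le> exp \<epsilon> * pu_density \<gamma> p0 x' z2"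
    using ldp xs z2 unfolding pu_ldp_def by blast
  then have "(1 - p0) / (1 - th) \<le> exp \<epsilon> * ((1 - p0) / (1 - th'))"
    using z2 by (simp add: pu_density_def th_def th'_def)
  also have "\<dots> \<le> exp \<epsilon> * (2 * (1 - p0))"
    using b' by (intro mult_left_mono) auto
  also have "\<dots> \<le> exp \<epsilon>" using p0 by simp
  finally show "(1 - p0) / (1 - cap_measure \<gamma> x) \<le> exp \<epsilon>" by (simp add: th_def)
qed



lemma pp_unif: "product_prob_space (\<lambda>_::nat. unif_sphere :: 'a::euclidean_space measure)"
  by (rule product_prob_spaceI) (rule ps_unif)

lemma ps_cand: "prob_space (candidates N :: (nat \<Rightarrow> 'a::euclidean_space) measure)"
  unfolding candidates_def by (rule prob_space_PiM) (rule ps_unif)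

lemma comp_meas[measurable]:
  assumes "k < N" "g \<in> borel_measurable (borel::'a::euclidean_space measure)"
  shows "(\<lambda>zs. g (zs k)) \<in> borel_measurable (candidates N :: (nat \<Rightarrow> 'a) measure)"
proof -
  have "(\<lambda>zs. zs k) \<in> measurable (candidates N :: (nat \<Rightarrow> 'a) measure) unif_sphere"
    unfolding candidates_def using assms by simp
  moreover have "g \<in> borel_measurable (unif_sphere::'a measure)" using assms meas_unif_iff by blast
  ultimately show ?thesis by (rule measurable_compose)
qed

lemma sec_moment:
  fixes w :: "'a::euclidean_space \<Rightarrow> real"
  assumes wm: "w \<in> borel_measurable borel" and wb: "\<And>z. \<bar>w z\<bar> \<le> 1"
    and w0: "(\<integral>z. w z \<partial>unif_sphere) = 0"
  shows "(\<integral>zs. (\<Sum>k<N. w (zs k))\<^sup>2 \<partial>candidates N) \<le> real N"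
proof -
  interpret P: prob_space "candidates N :: (nat \<Rightarrow> 'a) measure" by (rule ps_cand)
  interpret PP: product_prob_space "\<lambda>_::nat. unif_sphere :: 'a measure" "{..<N}" by (rule pp_unif)
  have wu: "w \<in> borel_measurable (unif_sphere::'a measure)" using wm meas_unif_iff by blast
  have wi: "integrable unif_sphere w"
    by (rule PP.M.integrable_const_bound[where B=1]) (use wb wu in auto)
  have ijk: "integrable (candidates N) (\<lambda>zs. w (zs j) * w (zs k))" if "j < N" "k < N" for j k
  proof (rule P.integrable_const_bound[where B=1])
    show "AE x in candidates N. norm (w (x j) * w (x k)) \<le> 1"
      by (rule AE_I2) (use mult_le_one[OF wb abs_ge_zero wb] in \<open>simp add: abs_mult\<close>)
    show "(\<lambda>x. w (x j) * w (x k)) \<in> borel_measurable (candidates N)"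
      using that wm by measurable
  qed
  have cross: "(\<integral>zs. w (zs j) * w (zs k) \<partial>candidates N) = 0" if "j < N" "k < N" "j \<noteq> k" for j k
  proof -
    define f where "f = (\<lambda>i. if i \<in> {j, k} then w else (\<lambda>_. 1::real))"
    have "\<And>zs. (\<Prod>i\<in>{..<N}. f i (zs i)) = w (zs j) * w (zs k)"
    proof -
      fix zs :: "nat \<Rightarrow> 'a"
      have "(\<Prod>i\<in>{..<N}. f i (zs i)) = (\<Prod>i\<in>{..<N}. if i \<in> {j,k} then w (zs i) else 1)"
        unfolding f_def by (rule prod.cong) auto
      also have "\<dots> = (\<Prod>i\<in>{..<N} \<inter> {i. i \<in> {j,k}}. w (zs i)) * (\<Prod>i\<in>{..<N} \<inter> - {i. i \<in> {j,k}}. 1)"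
        by (rule prod.If_cases) simp
      also have "{..<N} \<inter> {i. i \<in> {j,k}} = {j, k}" using that by auto
      finally show "(\<Prod>i\<in>{..<N}. f i (zs i)) = w (zs j) * w (zs k)" using that by simp
    qed
    then have "(\<integral>zs. w (zs j) * w (zs k) \<partial>candidates N) = (\<integral>zs. (\<Prod>i\<in>{..<N}. f i (zs i)) \<partial>candidates N)"
      by simp
    also have "\<dots> = (\<Prod>i\<in>{..<N}. integral\<^sup>L unif_sphere (f i))"
      unfolding candidates_def by (rule PP.product_integral_prod) (auto simp: f_def wi)
    also have "\<dots> = 0"
      using that w0 by (intro prod_zero) (auto simp: f_def intro!: bexI[of _ j])
    finally show ?thesis .
  qed
  have diag: "(\<integral>zs. w (zs j) * w (zs j) \<partial>candidates N) \<le> 1" if "j < N" for j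
  proof (rule P.integral_le_const[OF ijk[OF that that]], rule AE_I2)
    fix zs :: "nat \<Rightarrow> 'a"
    have "\<bar>w (zs j)\<bar> * \<bar>w (zs j)\<bar> \<le> 1" by (rule mult_le_one[OF wb abs_ge_zero wb])
    then show "w (zs j) * w (zs j) \<le> 1" by (simp add: abs_mult[symmetric])
  qed
  have "(\<integral>zs. (\<Sum>k<N. w (zs k))\<^sup>2 \<partial>candidates N) = (\<integral>zs. (\<Sum>j<N. \<Sum>k<N. w (zs j) * w (zs k)) \<partial>candidates N)"
    by (simp add: power2_eq_square sum_product)
  also have "\<dots> = (\<Sum>j<N. \<Sum>k<N. (\<integral>zs. w (zs j) * w (zs k) \<partial>candidates N))"
  proof -
    have "(\<integral>zs. (\<Sum>j<N. \<Sum>k<N. w (zs j) * w (zs k)) \<partial>candidates N) = (\<Sum>j<N. (\<integral>zs. (\<Sum>k<N. w (zs j) * w (zs k)) \<partial>candidates N))"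
      by (rule Bochner_Integration.integral_sum) (use ijk in auto)
    also have "\<dots> = (\<Sum>j<N. \<Sum>k<N. (\<integral>zs. w (zs j) * w (zs k) \<partial>candidates N))"
      by (rule sum.cong[OF refl], rule Bochner_Integration.integral_sum) (use ijk in auto)
    finally show ?thesis .
  qed
  also have "\<dots> = (\<Sum>j<N. (\<integral>zs. w (zs j) * w (zs j) \<partial>candidates N))"
  proof (rule sum.cong[OF refl])
    fix j assume j: "j \<in> {..<N}"
    have "(\<Sum>k<N. (\<integral>zs. w (zs j) * w (zs k) \<partial>candidates N)) =
          (\<Sum>k\<in>{j}. (\<integral>zs. w (zs j) * w (zs k) \<partial>candidates N))"
      using j cross by (intro sum.mono_neutral_right) auto
    then show "(\<Sum>k<N. (\<integral>zs. w (zs j) * w (zs k) \<partial>candidates N)) = (\<integral>zs. w (zs j) * w (zs j) \<partial>candidates N)"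
      by simp
  qed
  also have "\<dots> \<le> (\<Sum>j<N. 1)" using diag by (intro sum_mono) auto
  finally show ?thesis by simp
qed



lemma real_key:
  fixes a b th C N Mx :: real
  assumes ab: "0 < a" "0 < b" "a \<le> Mx" "b \<le> Mx" and th: "a * th + b * (1 - th) = 1"
    and C: "0 \<le> C" "C \<le> N" and N: "0 < N"
  shows "a * th - a * C / (a * C + b * (N - C)) \<le> Mx * \<bar>C - N * th\<bar> / N"
proof -
  define S where "S = a * C + b * (N - C)"
  have Smin: "S \<ge> min a b * N"
  proof -
    have "a * C \<ge> min a b * C" "b * (N - C) \<ge> min a b * (N - C)"
      using C by (auto intro: mult_right_mono)
    then show ?thesis by (simp add: S_def algebra_simps)
  qed
  have mpos: "min a b > 0" using ab by simp
  then have Sp: "S > 0" using Smin N by (meson mult_pos_pos order_less_le_trans)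
  have num: "a * th * S - a * C = a * b * (N * th - C)"
  proof -
    have "a * th * S - a * C = a * (th * a * C + th * b * N - th * b * C - C)"
      by (simp add: S_def algebra_simps)
    also have "th * a * C = C - b * (1 - th) * C"
    proof -
      have at: "a * th = 1 - b * (1 - th)" using th by linarith
      have "th * a * C = (a * th) * C" by simp
      also have "\<dots> = (1 - b * (1 - th)) * C" by (simp only: at)
      finally show ?thesis by (simp add: algebra_simps)
    qed
    finally show ?thesis by (simp add: algebra_simps)
  qed
  have "a * th - a * C / S = a * b * (N * th - C) / S"
    using Sp num by (simp add: field_simps)
  also have "\<dots> \<le> a * b * \<bar>C - N * th\<bar> / S"
    using Sp ab by (intro divide_right_mono mult_left_mono) auto
  also have "\<dots> \<le> a * b * \<bar>C - N * th\<bar> / (min a b * N)"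
    using Sp ab Smin mpos N by (intro divide_left_mono) auto
  also have "\<dots> = max a b * \<bar>C - N * th\<bar> / N"
  proof (cases "a \<le> b")
    case True then show ?thesis using ab N by (simp add: min_def max_def field_simps)
  next
    case False then show ?thesis using ab N by (simp add: min_def max_def field_simps)
  qed
  also have "\<dots> \<le> Mx * \<bar>C - N * th\<bar> / N"
    using ab N by (intro divide_right_mono mult_right_mono) auto
  finally show ?thesis by (simp add: S_def)
qed

lemma abs_amgm:
  fixes y s :: real assumes "s > 0"
  shows "\<bar>y\<bar> \<le> y\<^sup>2 / (2 * s) + s / 2"
proof -
  have "0 \<le> (\<bar>y\<bar> - s)\<^sup>2" by simp
  then have "2 * s * \<bar>y\<bar> \<le> y\<^sup>2 + s\<^sup>2" by (simp add: power2_eq_square algebra_simps)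
  then show ?thesis using assms by (simp add: field_simps power2_eq_square)
qed



lemma p_mrc_bound:
  fixes x :: "'a::euclidean_space" and Mx del :: real
  assumes x: "norm x = 1" and g: "0 \<le> \<gamma>" "\<gamma> < 1" and p0: "0 < p0" "p0 < 1"
    and aM: "p0 / cap_measure \<gamma> x \<le> Mx" and bM: "(1 - p0) / (1 - cap_measure \<gamma> x) \<le> Mx"
    and N: "N > 0" and del: "del > 0" and NM: "Mx\<^sup>2 \<le> del\<^sup>2 * real N"
  shows "p_mrc \<gamma> p0 N x \<ge> p0 - del"
proof -
  interpret P: prob_space "candidates N :: (nat \<Rightarrow> 'a) measure" by (rule ps_cand)
  define th where "th = cap_measure \<gamma> x"
  have th: "0 < th" "th < 1" using theta_pos[OF x g(2)] theta_lt1[OF x g(1)] by (auto simp: th_def)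
  define a where "a = p0 / th"
  define b where "b = (1 - p0) / (1 - th)"
  have ab: "0 < a" "0 < b" "a \<le> Mx" "b \<le> Mx" using th p0 aM bM by (auto simp: a_def b_def th_def)
  have Mx: "Mx > 0" using ab by simp
  have abth: "a * th + b * (1 - th) = 1" using th by (simp add: a_def b_def)
  have p0a: "p0 = a * th" using th by (simp add: a_def)
  define ind where "ind = (\<lambda>z::'a. indicator (cap \<gamma> x) z :: real)"
  have dens: "pu_density \<gamma> p0 x z = a * ind z + b * (1 - ind z)" for z
    by (simp add: pu_density_def ind_def a_def b_def th_def split: split_indicator)
  define C where "C = (\<lambda>zs::nat \<Rightarrow> 'a. \<Sum>k<N. ind (zs k))"
  define w where "w = (\<lambda>z. ind z - th)"
  have ind01: "ind z = 0 \<or> ind z = 1" for z by (simp add: ind_def split: split_indicator)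
  have C: "0 \<le> C zs" "C zs \<le> real N" for zs
  proof -
    show "0 \<le> C zs" unfolding C_def by (intro sum_nonneg) (simp add: ind_def)
    have "C zs \<le> (\<Sum>k<N. 1)" unfolding C_def by (intro sum_mono) (simp add: ind_def split: split_indicator)
    then show "C zs \<le> real N" by simp
  qed
  have Cw: "C zs - real N * th = (\<Sum>k<N. w (zs k))" for zs
    by (simp add: C_def w_def sum_subtractf)
  have eq1: "(\<Sum>k<N. mrc_pi \<gamma> p0 N x zs k * indicator (cap \<gamma> x) (zs k)) = a * C zs / (a * C zs + b * (real N - C zs))" for zs
  proof -
    have S: "(\<Sum>k<N. pu_density \<gamma> p0 x (zs k)) = a * C zs + b * (real N - C zs)"
      by (simp add: dens C_def sum.distrib sum_distrib_left[symmetric] sum_subtractf)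
    have "(\<Sum>k<N. mrc_pi \<gamma> p0 N x zs k * indicator (cap \<gamma> x) (zs k)) =
        (\<Sum>k<N. pu_density \<gamma> p0 x (zs k) * ind (zs k)) / (\<Sum>k<N. pu_density \<gamma> p0 x (zs k))"
      unfolding mrc_pi_def by (simp only: sum_divide_distrib times_divide_eq_left ind_def)
    also have "(\<Sum>k<N. pu_density \<gamma> p0 x (zs k) * ind (zs k)) = a * C zs"
    proof -
      have h: "pu_density \<gamma> p0 x z * ind z = a * ind z" for z using ind01[of z] by (auto simp: dens)
      show ?thesis by (simp only: h C_def sum_distrib_left)
    qed
    finally show ?thesis using S by simp
  qed
  define s where "s = del * real N / Mx"
  have s: "s > 0" using del N Mx by (simp add: s_def)
  define low where "low = (\<lambda>zs. p0 - Mx / real N * ((\<Sum>k<N. w (zs k))\<^sup>2 / (2 * s) + s / 2))"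
  have pw: "low zs \<le> (\<Sum>k<N. mrc_pi \<gamma> p0 N x zs k * indicator (cap \<gamma> x) (zs k))" for zs
  proof -
    have "a * th - a * C zs / (a * C zs + b * (real N - C zs)) \<le> Mx * \<bar>C zs - real N * th\<bar> / real N"
      using real_key[OF ab abth C(1) C(2)] N by simp
    also have "\<dots> \<le> Mx * ((\<Sum>k<N. w (zs k))\<^sup>2 / (2 * s) + s / 2) / real N"
      using abs_amgm[OF s, of "\<Sum>k<N. w (zs k)"] Mx N unfolding Cw
      by (intro divide_right_mono mult_left_mono) auto
    finally have k: "p0 - a * C zs / (a * C zs + b * (real N - C zs)) \<le> Mx * ((\<Sum>k<N. w (zs k))\<^sup>2 / (2 * s) + s / 2) / real N"
      by (simp only: p0a)
    have "Mx / real N * ((\<Sum>k<N. w (zs k))\<^sup>2 / (2 * s) + s / 2) = Mx * ((\<Sum>k<N. w (zs k))\<^sup>2 / (2 * s) + s / 2) / real N"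
      by simp
    then show ?thesis unfolding low_def eq1 using k by linarith
  qed
  have wm: "w \<in> borel_measurable borel" unfolding w_def ind_def by measurable
  have wb: "\<bar>w z\<bar> \<le> 1" for z using ind01[of z] th by (auto simp: w_def)
  have wu: "w \<in> borel_measurable (unif_sphere::'a measure)" using wm meas_unif_iff by blast
  have w0: "(\<integral>z. w z \<partial>unif_sphere) = 0"
  proof -
    interpret U: prob_space "unif_sphere :: 'a measure" by (rule ps_unif)
    have i: "integrable unif_sphere (indicator (cap \<gamma> x) :: 'a \<Rightarrow> real)"
      by (intro integrable_indicator_iff[THEN iffD2]) (auto simp: less_top[symmetric])
    have "(\<integral>z. w z \<partial>unif_sphere) = (\<integral>z. indicator (cap \<gamma> x) z - th \<partial>unif_sphere)"
      by (simp add: w_def ind_def)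
    also have "\<dots> = (\<integral>z. indicator (cap \<gamma> x) z \<partial>unif_sphere) - (\<integral>z. th \<partial>(unif_sphere::'a measure))"
      using i by simp
    also have "\<dots> = 0" using U.prob_space by (simp add: th_def cap_measure_def)
    finally show ?thesis .
  qed
  have mom: "(\<integral>zs. (\<Sum>k<N. w (zs k))\<^sup>2 \<partial>candidates N) \<le> real N"
    by (rule sec_moment[OF wm wb w0])
  have Ym: "(\<lambda>zs. (\<Sum>k<N. w (zs k))\<^sup>2) \<in> borel_measurable (candidates N)"
    using wm by measurable
  have Yi: "integrable (candidates N) (\<lambda>zs. (\<Sum>k<N. w (zs k))\<^sup>2)"
  proof (rule P.integrable_const_bound[where B="(real N)\<^sup>2"])
    show "AE zs in candidates N. norm ((\<Sum>k<N. w (zs k))\<^sup>2) \<le> (real N)\<^sup>2"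
    proof (rule AE_I2)
      fix zs :: "nat \<Rightarrow> 'a"
      have "\<bar>\<Sum>k<N. w (zs k)\<bar> \<le> (\<Sum>k<N. \<bar>w (zs k)\<bar>)" by (rule sum_abs)
      also have "\<dots> \<le> (\<Sum>k<N. 1)" using wb by (intro sum_mono) auto
      finally have "\<bar>\<Sum>k<N. w (zs k)\<bar> \<le> real N" by simp
      then have "\<bar>\<Sum>k<N. w (zs k)\<bar>\<^sup>2 \<le> (real N)\<^sup>2" by (intro power_mono) auto
      then show "norm ((\<Sum>k<N. w (zs k))\<^sup>2) \<le> (real N)\<^sup>2" by simp
    qed
  qed (rule Ym)
  have lowi: "integrable (candidates N) low"
    unfolding low_def using Yi by (intro Bochner_Integration.integrable_diff integrable_mult_right integrable_add integrable_divide) auto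
  have gm: "(\<lambda>zs. \<Sum>k<N. mrc_pi \<gamma> p0 N x zs k * indicator (cap \<gamma> x) (zs k)) \<in> borel_measurable (candidates N)"
    unfolding mrc_pi_def by measurable
  have gi: "integrable (candidates N) (\<lambda>zs. \<Sum>k<N. mrc_pi \<gamma> p0 N x zs k * indicator (cap \<gamma> x) (zs k))"
  proof (rule P.integrable_const_bound[where B=1])
    show "AE zs in candidates N. norm (\<Sum>k<N. mrc_pi \<gamma> p0 N x zs k * indicator (cap \<gamma> x) (zs k)) \<le> 1"
    proof (rule AE_I2)
      fix zs :: "nat \<Rightarrow> 'a"
      have Sp: "0 \<le> a * C zs" "a * C zs \<le> a * C zs + b * (real N - C zs)"
        using ab C[of zs] by auto
      then have "0 \<le> a * C zs / (a * C zs + b * (real N - C zs))" "a * C zs / (a * C zs + b * (real N - C zs)) \<le> 1"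
        by (auto simp: divide_le_eq_1)
      then show "norm (\<Sum>k<N. mrc_pi \<gamma> p0 N x zs k * indicator (cap \<gamma> x) (zs k)) \<le> 1"
        unfolding eq1 real_norm_def abs_le_iff by linarith
    qed
  qed (rule gm)
  have "(\<integral>zs. low zs \<partial>candidates N) \<le> p_mrc \<gamma> p0 N x"
    unfolding p_mrc_def by (rule Bochner_Integration.integral_mono[OF lowi gi pw])
  moreover have "(\<integral>zs. low zs \<partial>candidates N) = p0 - Mx / real N * ((\<integral>zs. (\<Sum>k<N. w (zs k))\<^sup>2 \<partial>candidates N) / (2 * s) + s / 2)"
    unfolding low_def using Yi P.prob_space by simp
  moreover have "Mx / real N * ((\<integral>zs. (\<Sum>k<N. w (zs k))\<^sup>2 \<partial>candidates N) / (2 * s) + s / 2) \<le> Mx / real N * (real N / (2 * s) + s / 2)"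
    using mom s Mx N by (intro mult_left_mono add_right_mono divide_right_mono) auto
  moreover have "Mx / real N * (real N / (2 * s) + s / 2) = Mx\<^sup>2 / (2 * del * real N) + del / 2"
    using Mx N del by (simp add: s_def field_simps power2_eq_square)
  moreover have "Mx\<^sup>2 / (2 * del * real N) \<le> del / 2"
    using NM del N by (simp add: field_simps power2_eq_square)
  ultimately show ?thesis by linarith
qed



declare comp_meas[measurable del]

lemma pu_lower:
  fixes x :: "'a::euclidean_space"
  assumes x: "norm x = 1" and g: "0 \<le> \<gamma>" "\<gamma> < 1" and p0: "0 \<le> p0" "p0 \<le> 1"
    and m: "m_pu TYPE('a) \<gamma> p0 > 0"
  shows "(1 / m_pu TYPE('a) \<gamma> p0 - 1)\<^sup>2 \<le> pu_mse \<gamma> p0 x"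
proof -
  interpret U: prob_space "unif_sphere :: 'a measure" by (rule ps_unif)
  define m where "m = m_pu TYPE('a) \<gamma> p0"
  have mp: "m > 0" using m by (simp add: m_def)
  define th where "th = cap_measure \<gamma> x"
  have th: "0 < th" "th < 1" using theta_pos[OF x g(2)] theta_lt1[OF x g(1)] by (auto simp: th_def)
  define Bd where "Bd = \<bar>p0 / th\<bar> + \<bar>(1 - p0) / (1 - th)\<bar>"
  have dle: "\<bar>pu_density \<gamma> p0 x z\<bar> \<le> Bd" for z by (auto simp: pu_density_def th_def Bd_def)
  have dnn: "0 \<le> pu_density \<gamma> p0 x z" for z by (rule pu_density_nonneg[OF x g p0(2) p0(1)])
  note di = pu_density_int[OF x g]
  define F where "F = (\<lambda>z::'a. (norm ((1 / m) *\<^sub>R z - x))\<^sup>2 * pu_density \<gamma> p0 x z)"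
  have "F \<in> borel_measurable borel" unfolding F_def by measurable
  then have Fm: "F \<in> borel_measurable unif_sphere" using meas_unif_iff by blast
  have AEn: "AE z in (unif_sphere::'a measure). norm z = 1" by (rule AE_unif_norm)
  have Fi: "integrable unif_sphere F"
  proof (rule U.integrable_const_bound[where B="(1 / m + 1)\<^sup>2 * Bd"])
    show "AE z in unif_sphere. norm (F z) \<le> (1 / m + 1)\<^sup>2 * Bd"
      using AEn
    proof eventually_elim
      fix z :: 'a assume z: "norm z = 1"
      have "norm ((1 / m) *\<^sub>R z - x) \<le> norm ((1 / m) *\<^sub>R z) + norm x" by (rule norm_triangle_ineq4)
      also have "\<dots> = 1 / m + 1" using z x mp by simp
      finally have "(norm ((1 / m) *\<^sub>R z - x))\<^sup>2 \<le> (1 / m + 1)\<^sup>2" by (intro power_mono) auto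
      then show "norm (F z) \<le> (1 / m + 1)\<^sup>2 * Bd"
        unfolding F_def using dle[of z] by (simp add: abs_mult mult_mono)
    qed
  qed (rule Fm)
  have "(\<integral>z. (1 / m - 1)\<^sup>2 * pu_density \<gamma> p0 x z \<partial>unif_sphere) \<le> (\<integral>z. F z \<partial>unif_sphere)"
  proof (rule integral_mono_AE)
    show "integrable unif_sphere (\<lambda>z. (1 / m - 1)\<^sup>2 * pu_density \<gamma> p0 x z)" using di(1) by simp
    show "integrable unif_sphere F" by (rule Fi)
    show "AE z in unif_sphere. (1 / m - 1)\<^sup>2 * pu_density \<gamma> p0 x z \<le> F z"
      using AEn
    proof eventually_elim
      fix z :: 'a assume z: "norm z = 1"
      have "\<bar>norm ((1 / m) *\<^sub>R z) - norm x\<bar> \<le> norm ((1 / m) *\<^sub>R z - x)" by (rule norm_triangle_ineq3)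
      then have "\<bar>1 / m - 1\<bar> \<le> norm ((1 / m) *\<^sub>R z - x)" using z x mp by simp
      then have "\<bar>1 / m - 1\<bar>\<^sup>2 \<le> (norm ((1 / m) *\<^sub>R z - x))\<^sup>2" by (intro power_mono) auto
      then have "(1 / m - 1)\<^sup>2 \<le> (norm ((1 / m) *\<^sub>R z - x))\<^sup>2" by simp
      then show "(1 / m - 1)\<^sup>2 * pu_density \<gamma> p0 x z \<le> F z"
        unfolding F_def using dnn[of z] by (intro mult_right_mono) auto
    qed
  qed
  moreover have "(\<integral>z. (1 / m - 1)\<^sup>2 * pu_density \<gamma> p0 x z \<partial>unif_sphere) = (1 / m - 1)\<^sup>2"
    using di by simp
  ultimately show ?thesis using di(2) by (simp add: pu_mse_def F_def m_def)
qed

lemma mrc_upper: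
  fixes x :: "'a::euclidean_space"
  assumes x: "norm x = 1" and g: "0 \<le> \<gamma>" "\<gamma> < 1" and p0: "0 < p0" "p0 < 1"
    and N: "N > 0" and m: "m_mrc \<gamma> p0 N x > 0"
  shows "mrc_mse \<gamma> p0 N x \<le> (1 / m_mrc \<gamma> p0 N x + 1)\<^sup>2"
proof -
  interpret P: prob_space "candidates N :: (nat \<Rightarrow> 'a) measure" by (rule ps_cand)
  define m where "m = m_mrc \<gamma> p0 N x"
  have mp: "m > 0" using m by (simp add: m_def)
  define th where "th = cap_measure \<gamma> x"
  have th: "0 < th" "th < 1" using theta_pos[OF x g(2)] theta_lt1[OF x g(1)] by (auto simp: th_def)
  have dpos: "0 < pu_density \<gamma> p0 x z" for z using th p0 by (simp add: pu_density_def th_def)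
  have AEn: "AE zs in candidates N. \<forall>k\<in>{..<N}. norm ((zs::nat \<Rightarrow> 'a) k) = 1"
    unfolding candidates_def
    by (intro eventually_ball_finite ballI AE_PiM_component ps_unif AE_unif_norm) auto
  have "(\<integral>zs. (\<Sum>k<N. mrc_pi \<gamma> p0 N x zs k * (norm ((1 / m) *\<^sub>R zs k - x))\<^sup>2) \<partial>candidates N)
      \<le> (\<integral>zs. (1 / m + 1)\<^sup>2 \<partial>(candidates N :: (nat \<Rightarrow> 'a) measure))"
  proof (rule integral_mono_AE')
    show "integrable (candidates N :: (nat \<Rightarrow> 'a) measure) (\<lambda>zs. (1 / m + 1)\<^sup>2)" by simp
    show "AE zs in (candidates N :: (nat \<Rightarrow> 'a) measure). 0 \<le> (1 / m + 1)\<^sup>2" by simp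
    show "AE zs in candidates N. (\<Sum>k<N. mrc_pi \<gamma> p0 N x zs k * (norm ((1 / m) *\<^sub>R zs k - x))\<^sup>2) \<le> (1 / m + 1)\<^sup>2"
      using AEn
    proof eventually_elim
      fix zs :: "nat \<Rightarrow> 'a" assume zs: "\<forall>k\<in>{..<N}. norm (zs k) = 1"
      define S where "S = (\<Sum>k<N. pu_density \<gamma> p0 x (zs k))"
      have Sp: "S > 0" unfolding S_def using N dpos by (intro sum_pos) auto
      have pinn: "0 \<le> mrc_pi \<gamma> p0 N x zs k" for k
        unfolding mrc_pi_def using dpos[of "zs k"] Sp by (simp add: S_def[symmetric])
      have psum: "(\<Sum>k<N. mrc_pi \<gamma> p0 N x zs k) = 1"
        unfolding mrc_pi_def using Sp by (simp add: S_def[symmetric] sum_divide_distrib[symmetric])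
      have "(\<Sum>k<N. mrc_pi \<gamma> p0 N x zs k * (norm ((1 / m) *\<^sub>R zs k - x))\<^sup>2) \<le> (\<Sum>k<N. mrc_pi \<gamma> p0 N x zs k * (1 / m + 1)\<^sup>2)"
      proof (rule sum_mono)
        fix k assume k: "k \<in> {..<N}"
        have "norm ((1 / m) *\<^sub>R zs k - x) \<le> norm ((1 / m) *\<^sub>R zs k) + norm x" by (rule norm_triangle_ineq4)
        also have "\<dots> = 1 / m + 1" using zs k x mp by simp
        finally have "(norm ((1 / m) *\<^sub>R zs k - x))\<^sup>2 \<le> (1 / m + 1)\<^sup>2" by (intro power_mono) auto
        then show "mrc_pi \<gamma> p0 N x zs k * (norm ((1 / m) *\<^sub>R zs k - x))\<^sup>2 \<le> mrc_pi \<gamma> p0 N x zs k * (1 / m + 1)\<^sup>2"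
          using pinn[of k] by (intro mult_left_mono) auto
      qed
      also have "\<dots> = (1 / m + 1)\<^sup>2" using psum by (simp add: sum_distrib_right[symmetric])
      finally show "(\<Sum>k<N. mrc_pi \<gamma> p0 N x zs k * (norm ((1 / m) *\<^sub>R zs k - x))\<^sup>2) \<le> (1 / m + 1)\<^sup>2" .
    qed
  qed
  then show ?thesis using P.prob_space by (simp add: mrc_mse_def m_def)
qed



theorem theorem10:
  fixes x :: "'a::euclidean_space" and \<gamma> p0 \<epsilon> lam :: real and N :: nat
  assumes d2: "DIM('a) \<ge> 2"
    and gam: "0 \<le> \<gamma>" "\<gamma> < 1"
    and p0: "1/2 < p0" "p0 \<le> 1"
    and ldp: "pu_ldp TYPE('a) \<epsilon> \<gamma> p0"
    and lam: "lam > 0"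
    and N: "real N \<ge> 2 * exp (2 * \<epsilon>) * (2 * (1 + lam) / (lam * (p0 - 1/2)))\<^sup>2
                     * ln (4 * (1 + lam) / (lam * (p0 - 1/2)))"
    and x: "x \<in> sphere 0 1"
  shows "mrc_mse \<gamma> p0 N x \<le>
           (1 + lam)\<^sup>2 * pu_mse \<gamma> p0 x
           + 2 * (1 + lam) * (2 + lam) * sqrt (pu_mse \<gamma> p0 x) + (2 + lam)\<^sup>2"
proof -
  have xn: "norm x = 1" using x by simp
  note lc = ldp_cons[OF xn d2 gam p0 ldp]
  define Mx where "Mx = exp \<epsilon>"
  have Mx: "Mx > 0" by (simp add: Mx_def)
  define del where "del = lam * (p0 - 1/2) / (1 + lam)"
  have del: "del > 0" using lam p0 by (simp add: del_def)
  have del2: "del \<le> 1/2"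
  proof -
    have "lam / (1 + lam) \<le> 1" using lam by simp
    moreover have "p0 - 1/2 \<le> 1/2" using p0 by simp
    ultimately have "lam / (1 + lam) * (p0 - 1/2) \<le> 1 * (1/2)"
      using lam p0 by (intro mult_mono) auto
    then show ?thesis by (simp add: del_def)
  qed
  have e2: "2 * (1 + lam) / (lam * (p0 - 1/2)) = 2 / del" using lam p0 by (simp add: del_def)
  have e4: "4 * (1 + lam) / (lam * (p0 - 1/2)) = 4 / del" using lam p0 by (simp add: del_def)
  have lnb: "ln (4 / del) \<ge> 7/8"
  proof -
    have "ln (del / 4) \<le> del / 4 - 1" using del by (intro ln_le_minus_one) simp
    moreover have "ln (4 / del) = - ln (del / 4)"
      using del ln_inverse[of "del / 4"] by (simp add: inverse_eq_divide)
    ultimately show ?thesis using del2 by linarith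
  qed
  have NN: "real N \<ge> 2 * Mx\<^sup>2 * (4 / del\<^sup>2) * (7/8)"
  proof -
    have "2 * Mx\<^sup>2 * (4 / del\<^sup>2) * (7/8) \<le> 2 * Mx\<^sup>2 * (4 / del\<^sup>2) * ln (4 / del)"
      using lnb del by (intro mult_left_mono) auto
    also have "\<dots> = 2 * exp (2 * \<epsilon>) * (2 * (1 + lam) / (lam * (p0 - 1/2)))\<^sup>2 * ln (4 * (1 + lam) / (lam * (p0 - 1/2)))"
      unfolding e2 e4 Mx_def exp_double by (simp add: power_divide)
    finally show ?thesis using N by linarith
  qed
  have Npos: "N > 0"
  proof -
    have "0 < 2 * Mx\<^sup>2 * (4 / del\<^sup>2) * (7/8)" using Mx del by simp
    then show ?thesis using NN by linarith
  qed
  have NM: "Mx\<^sup>2 \<le> del\<^sup>2 * real N"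
  proof -
    have "del\<^sup>2 * real N \<ge> del\<^sup>2 * (2 * Mx\<^sup>2 * (4 / del\<^sup>2) * (7/8))"
      using NN by (intro mult_left_mono) auto
    also have "del\<^sup>2 * (2 * Mx\<^sup>2 * (4 / del\<^sup>2) * (7/8)) = 7 * Mx\<^sup>2" using del by simp
    finally have "7 * Mx\<^sup>2 \<le> del\<^sup>2 * real N" .
    moreover have "0 \<le> Mx\<^sup>2" by simp
    ultimately show ?thesis by linarith
  qed
  have pm: "p_mrc \<gamma> p0 N x \<ge> p0 - del"
    using p_mrc_bound[OF xn gam _ lc(1) _ _ Npos del NM] lc p0 by (simp add: Mx_def)
  obtain K B1 B2 where KB: "K > 0" "0 < B1" "B1 \<le> B2"
    and mf: "\<And>p. m_fun DIM('a) \<gamma> p = K * (p / B1 - (1 - p) / B2)"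
    using m_fun_form[OF d2 gam] by blast
  define mpu where "mpu = m_pu TYPE('a) \<gamma> p0"
  define mmrc where "mmrc = m_mrc \<gamma> p0 N x"
  have mpu_eq: "mpu = K * (p0 / B1 - (1 - p0) / B2)" by (simp add: mpu_def m_pu_def mf)
  have mmrc_eq: "mmrc = K * (p_mrc \<gamma> p0 N x / B1 - (1 - p_mrc \<gamma> p0 N x) / B2)"
    by (simp add: mmrc_def m_mrc_def mf)
  note mk = m_key[OF KB lam p0(1), of "p_mrc \<gamma> p0 N x"]
  have mpu: "mpu > 0" using mk pm by (simp add: mpu_eq del_def)
  have mmrc: "mmrc \<ge> mpu / (1 + lam)" using mk pm by (simp add: mpu_eq mmrc_eq del_def)
  have "mpu / (1 + lam) > 0" using mpu lam by simp
  then have mmrcp: "mmrc > 0" using mmrc by linarith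
  define E where "E = pu_mse \<gamma> p0 x"
  have E1: "(1 / mpu - 1)\<^sup>2 \<le> E"
    unfolding E_def mpu_def by (rule pu_lower[OF xn gam]) (use p0 mpu in \<open>auto simp: mpu_def\<close>)
  have E0: "0 \<le> E" using E1 by (meson order_trans zero_le_power2)
  have s1: "1 / mpu \<le> 1 + sqrt E"
  proof -
    have "sqrt ((1 / mpu - 1)\<^sup>2) \<le> sqrt E" using E1 by (rule real_sqrt_le_mono)
    then have "\<bar>1 / mpu - 1\<bar> \<le> sqrt E" by simp
    then show ?thesis by linarith
  qed
  have up: "mrc_mse \<gamma> p0 N x \<le> (1 / mmrc + 1)\<^sup>2"
    unfolding mmrc_def by (rule mrc_upper[OF xn gam _ lc(1) Npos]) (use p0 mmrcp in \<open>auto simp: mmrc_def\<close>)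
  have i1: "1 / mmrc \<le> (1 + lam) / mpu"
  proof -
    have "1 / mmrc \<le> 1 / (mpu / (1 + lam))"
      using mmrc mpu lam mmrcp by (intro divide_left_mono mult_pos_pos) auto
    then show ?thesis by simp
  qed
  have "(1 + lam) / mpu = (1 + lam) * (1 / mpu)" by simp
  also have "\<dots> \<le> (1 + lam) * (1 + sqrt E)" using s1 lam by (intro mult_left_mono) auto
  finally have i2: "1 / mmrc + 1 \<le> (1 + lam) * sqrt E + (2 + lam)" using i1 by (simp add: algebra_simps)
  have "0 \<le> 1 / mmrc + 1" using mmrcp by simp
  then have "(1 / mmrc + 1)\<^sup>2 \<le> ((1 + lam) * sqrt E + (2 + lam))\<^sup>2" using i2 by (intro power_mono)
  also have "\<dots> = (1 + lam)\<^sup>2 * E + 2 * (1 + lam) * (2 + lam) * sqrt E + (2 + lam)\<^sup>2"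
    using E0 by (simp add: power2_eq_square algebra_simps)
  finally show ?thesis using up by (simp add: E_def)
qed

end
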